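(* Let $X$ be a Hausdorff $P$-space. The following are equivalent: (1) $X$ is locally Menger; (2) for each $x\in X$ and each open set $V$ with $x\in V$ there exist an open set $U$ and a Menger subspace $Y$ of $X$ such that $x\in U\subseteq Y\subseteq V$; (3) for each $x\in X$ there exists an open set $U$ with $x\in U$ such that $\overline{U}$ is Menger; (4) $X$ has a basis consisting of closed Menger neighbourhoods.
   Context: A space $X$ is Menger if for each sequence $(\mathcal{U}_n)$ of open covers of $X$ there is a sequence $(\mathcal{V}_n)$ with each $\mathcal{V}_n$ a finite subset of $\mathcal{U}_n$ and $\bigcup_{n}\bigcup\mathcal{V}_n=X$. A space $X$ is locally Menger if for each $x\in X$ there exist an open set $U$ and a Menger subspace $Y$ of $X$ with $x\in U\subseteq Y$. A $P$-space is a space in which every countable intersection of open sets is open. *)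

theory Defs
  imports "HOL-Analysis.Analysis"
begin

definition menger_space :: "'a topology \<Rightarrow> bool" where
  "menger_space X \<longleftrightarrow>
     (\<forall>\<U> :: nat \<Rightarrow> 'a set set.
        (\<forall>n. (\<forall>U\<in>\<U> n. openin X U) \<and> topspace X \<subseteq> \<Union>(\<U> n)) \<longrightarrow>
        (\<exists>\<V> :: nat \<Rightarrow> 'a set set.
            (\<forall>n. finite (\<V> n) \<and> \<V> n \<subseteq> \<U> n) \<and>
            topspace X \<subseteq> (\<Union>n. \<Union>(\<V> n))))"

definition menger_subspace :: "'a topology \<Rightarrow> 'a set \<Rightarrow> bool" where
  "menger_subspace X Y \<longleftrightarrow> Y \<subseteq> topspace X \<and> menger_space (subtopology X Y)"

text \<open>P-space: every countable intersection of open sets is open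
  (the empty intersection is read as the whole space).\<close>
definition p_space :: "'a topology \<Rightarrow> bool" where
  "p_space X \<longleftrightarrow>
     (\<forall>\<U>. countable \<U> \<and> (\<forall>U\<in>\<U>. openin X U) \<longrightarrow> openin X (topspace X \<inter> \<Inter>\<U>))"

definition locally_menger :: "'a topology \<Rightarrow> bool" where
  "locally_menger X \<longleftrightarrow>
     (\<forall>x\<in>topspace X. \<exists>U Y. openin X U \<and> menger_subspace X Y \<and> x \<in> U \<and> U \<subseteq> Y)"

end

theory Submission
  imports Defs
begin

lemma menger_closed:
  assumes "menger_space T" "closedin T C"
  shows "menger_space (subtopology T C)"
  unfolding menger_space_def
proof (intro allI impI)
  fix \<U> :: "nat \<Rightarrow> 'a set set"
  assume H: "\<forall>n. (\<forall>U\<in>\<U> n. openin (subtopology T C) U) \<and> topspace (subtopology T C) \<subseteq> \<Union>(\<U> n)"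
  define \<W> where "\<W> n = {S. openin T S \<and> S \<inter> C \<in> \<U> n} \<union> {topspace T - C}" for n
  have Wc: "\<forall>n. (\<forall>U\<in>\<W> n. openin T U) \<and> topspace T \<subseteq> \<Union>(\<W> n)"
  proof
    fix n
    have "topspace T \<subseteq> \<Union>(\<W> n)"
    proof
      fix p assume p: "p \<in> topspace T"
      show "p \<in> \<Union>(\<W> n)"
      proof (cases "p \<in> C")
        case True
        then obtain U where U: "U \<in> \<U> n" "p \<in> U" using H p by (simp add: Int_absorb) blast
        then obtain S where "openin T S" "U = S \<inter> C" using H unfolding openin_subtopology by blast
        then show ?thesis using U unfolding \<W>_def by blast
      next
        case False then show ?thesis using p unfolding \<W>_def by blast
      qed
    qed
    moreover have "\<forall>U\<in>\<W> n. openin T U" using assms(2) unfolding \<W>_def closedin_def by auto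
    ultimately show "(\<forall>U\<in>\<W> n. openin T U) \<and> topspace T \<subseteq> \<Union>(\<W> n)" by blast
  qed
  obtain \<V> where V: "\<forall>n. finite (\<V> n) \<and> \<V> n \<subseteq> \<W> n" "topspace T \<subseteq> (\<Union>n. \<Union>(\<V> n))"
    using assms(1)[unfolded menger_space_def, THEN spec, THEN mp, OF Wc] by blast
  define \<V>' where "\<V>' n = (\<lambda>S. S \<inter> C) ` (\<V> n - {topspace T - C})" for n
  show "\<exists>\<V>. (\<forall>n. finite (\<V> n) \<and> \<V> n \<subseteq> \<U> n) \<and> topspace (subtopology T C) \<subseteq> (\<Union>n. \<Union>(\<V> n))"
  proof (intro exI conjI allI)
    fix n show "finite (\<V>' n)" using V(1) unfolding \<V>'_def by auto
    show "\<V>' n \<subseteq> \<U> n" using V(1) unfolding \<V>'_def \<W>_def by blast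
  next
    show "topspace (subtopology T C) \<subseteq> (\<Union>n. \<Union>(\<V>' n))"
    proof
      fix p assume "p \<in> topspace (subtopology T C)"
      hence p: "p \<in> topspace T" "p \<in> C" by auto
      then obtain n S where nS: "S \<in> \<V> n" "p \<in> S" using V(2) by blast
      moreover have "S \<noteq> topspace T - C" using p nS by blast
      ultimately show "p \<in> (\<Union>n. \<Union>(\<V>' n))" using p unfolding \<V>'_def by blast
    qed
  qed
qed

lemma menger_lindelof:
  assumes "menger_subspace X Y" "\<forall>A\<in>\<A>. openin X A" "Y \<subseteq> \<Union>\<A>"
  shows "\<exists>\<A>'. countable \<A>' \<and> \<A>' \<subseteq> \<A> \<and> Y \<subseteq> \<Union>\<A>'"
proof -
  have Y: "Y \<subseteq> topspace X" "menger_space (subtopology X Y)" using assms(1) unfolding menger_subspace_def by auto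
  define \<U> where "\<U> = (\<lambda>n::nat. (\<lambda>A. A \<inter> Y) ` \<A>)"
  have Uc: "\<forall>n. (\<forall>U\<in>\<U> n. openin (subtopology X Y) U) \<and> topspace (subtopology X Y) \<subseteq> \<Union>(\<U> n)"
    using assms(2,3) unfolding \<U>_def by (auto simp: openin_subtopology_Int)
  obtain \<V> where V: "\<forall>n. finite (\<V> n) \<and> \<V> n \<subseteq> \<U> n" "topspace (subtopology X Y) \<subseteq> (\<Union>n. \<Union>(\<V> n))"
    using Y(2)[unfolded menger_space_def, THEN spec, THEN mp, OF Uc] by blast
  define g where "g V = (SOME A. A \<in> \<A> \<and> V = A \<inter> Y)" for V
  have g: "g V \<in> \<A> \<and> V = g V \<inter> Y" if "V \<in> \<U> n" for V n
  proof -
    have "\<exists>A. A \<in> \<A> \<and> V = A \<inter> Y" using that unfolding \<U>_def by blast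
    then show ?thesis unfolding g_def by (rule someI_ex)
  qed
  show ?thesis
  proof (intro exI conjI)
    show "countable (\<Union>n. g ` \<V> n)" using V(1) by (simp add: countable_finite)
    show "(\<Union>n. g ` \<V> n) \<subseteq> \<A>" using V(1) g by blast
    show "Y \<subseteq> \<Union>(\<Union>n. g ` \<V> n)"
    proof
      fix y assume "y \<in> Y"
      then obtain n V where nV: "V \<in> \<V> n" "y \<in> V" using V(2) Y(1) by auto
      then have "y \<in> g V" using g V(1) by blast
      then show "y \<in> \<Union>(\<Union>n. g ` \<V> n)" using nV by blast
    qed
  qed
qed

lemma sep:
  assumes H: "Hausdorff_space X" and P: "p_space X" and M: "menger_subspace X Y"
    and W: "openin X W" and x: "x \<in> topspace X" and nx: "x \<notin> Y - W"
  shows "\<exists>G Ob. openin X G \<and> openin X Ob \<and> x \<in> G \<and> Y - W \<subseteq> Ob \<and> G \<inter> Ob = {}"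
proof -
  define \<A> where "\<A> = insert W {A. openin X A \<and> (\<exists>B. openin X B \<and> x \<in> B \<and> A \<inter> B = {})}"
  have Ytop: "Y \<subseteq> topspace X" using M unfolding menger_subspace_def by auto
  have "Y \<subseteq> \<Union>\<A>"
  proof
    fix y assume y: "y \<in> Y"
    show "y \<in> \<Union>\<A>"
    proof (cases "y \<in> W")
      case True then show ?thesis unfolding \<A>_def by blast
    next
      case False
      then have "y \<noteq> x" using nx y by blast
      have yt: "y \<in> topspace X" using y Ytop by blast
      obtain A B where "openin X A" "openin X B" "y \<in> A" "x \<in> B" "disjnt A B"
        using H[unfolded Hausdorff_space_def, rule_format, OF conjI[OF yt conjI[OF x \<open>y \<noteq> x\<close>]]] by blast
      then show ?thesis unfolding \<A>_def disjnt_def by blast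
    qed
  qed
  moreover have "\<forall>A\<in>\<A>. openin X A" using W unfolding \<A>_def by auto
  ultimately have "\<exists>\<A>'. countable \<A>' \<and> \<A>' \<subseteq> \<A> \<and> Y \<subseteq> \<Union>\<A>'"
    using menger_lindelof[OF M] by simp
  then obtain \<A>' where A': "countable \<A>'" "\<A>' \<subseteq> \<A>" "Y \<subseteq> \<Union>\<A>'" by blast
  define b where "b A = (SOME B. openin X B \<and> x \<in> B \<and> A \<inter> B = {})" for A
  have b: "openin X (b A) \<and> x \<in> b A \<and> A \<inter> b A = {}" if "A \<in> \<A>'" "A \<noteq> W" for A
  proof -
    have "\<exists>B. openin X B \<and> x \<in> B \<and> A \<inter> B = {}" using that A'(2) unfolding \<A>_def by blast
    then show ?thesis unfolding b_def by (rule someI_ex)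
  qed
  define G where "G = topspace X \<inter> \<Inter>(b ` (\<A>' - {W}))"
  define Ob where "Ob = \<Union>(\<A>' - {W})"
  show ?thesis
  proof (intro exI conjI)
    have "countable (b ` (\<A>' - {W}))" using A'(1) by simp
    moreover have "\<forall>U\<in>b ` (\<A>' - {W}). openin X U" using b by auto
    ultimately show "openin X G" unfolding G_def using P[unfolded p_space_def, rule_format, of "b ` (\<A>' - {W})"] by blast
    have "\<And>S. S \<in> \<A>' - {W} \<Longrightarrow> openin X S" using A'(2) unfolding \<A>_def by auto
    then show "openin X Ob" unfolding Ob_def by (rule openin_Union)
    show "x \<in> G" using x b unfolding G_def by auto
    show "Y - W \<subseteq> Ob" using A'(3) unfolding Ob_def by blast
    show "G \<inter> Ob = {}"
    proof (rule ccontr)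
      assume "G \<inter> Ob \<noteq> {}"
      then obtain p A where p: "p \<in> G" "A \<in> \<A>' - {W}" "p \<in> A" unfolding Ob_def by blast
      then have "p \<in> b A" unfolding G_def by blast
      then show False using b[of A] p by blast
    qed
  qed
qed

lemma menger_closedin:
  assumes H: "Hausdorff_space X" and P: "p_space X" and M: "menger_subspace X Y"
  shows "closedin X Y"
proof -
  have Ytop: "Y \<subseteq> topspace X" using M unfolding menger_subspace_def by auto
  have "openin X (topspace X - Y)"
    unfolding openin_subopen[of X "topspace X - Y"]
  proof
    fix z assume z: "z \<in> topspace X - Y"
    then obtain G Ob where "openin X G" "openin X Ob" "z \<in> G" "Y - {} \<subseteq> Ob" "G \<inter> Ob = {}"
      using sep[OF H P M, of "{}" z] by auto
    moreover have "G \<subseteq> topspace X" using \<open>openin X G\<close> by (rule openin_subset)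
    ultimately show "\<exists>T. openin X T \<and> z \<in> T \<and> T \<subseteq> topspace X - Y"
      by blast
  qed
  then show ?thesis using Ytop closedin_def by blast
qed

lemma shrink:
  assumes H: "Hausdorff_space X" and P: "p_space X" and M: "menger_subspace X Y"
    and W: "openin X W" and x: "x \<in> W" and WY: "W \<subseteq> Y"
  shows "\<exists>G. openin X G \<and> x \<in> G \<and> X closure_of G \<subseteq> W"
proof -
  have xt: "x \<in> topspace X" using openin_subset[OF W] x by blast
  obtain G Ob where G: "openin X G" "openin X Ob" "x \<in> G" "Y - W \<subseteq> Ob" "G \<inter> Ob = {}"
    using sep[OF H P M W xt] x by auto
  have cY: "closedin X Y" using menger_closedin[OF H P M] .
  have c1: "X closure_of (W \<inter> G) \<subseteq> Y" using closure_of_minimal[OF _ cY] WY by blast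
  have c2: "X closure_of (W \<inter> G) \<inter> Ob = {}"
  proof (rule ccontr)
    assume "X closure_of (W \<inter> G) \<inter> Ob \<noteq> {}"
    then obtain p where "p \<in> X closure_of (W \<inter> G)" "p \<in> Ob" by blast
    then show False using G(2,5) unfolding in_closure_of by blast
  qed
  have "X closure_of (W \<inter> G) \<subseteq> W" using c1 c2 G(4) by blast
  moreover have "openin X (W \<inter> G)" using W G(1) by (rule openin_Int)
  ultimately show ?thesis using x G(3) by blast
qed

lemma clopen:
  assumes H: "Hausdorff_space X" and P: "p_space X" and M: "menger_subspace X Y"
    and W: "openin X W0" and x: "x \<in> W0" and WY: "W0 \<subseteq> Y"
  shows "\<exists>C. openin X C \<and> closedin X C \<and> x \<in> C \<and> C \<subseteq> W0"
proof -
  define f where "f W = (SOME G. openin X G \<and> x \<in> G \<and> X closure_of G \<subseteq> W)" for W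
  define Wn where "Wn n = (f ^^ n) W0" for n
  have fprop: "openin X (f W) \<and> x \<in> f W \<and> X closure_of (f W) \<subseteq> W"
    if "openin X W" "x \<in> W" "W \<subseteq> Y" for W
  proof -
    have "\<exists>G. openin X G \<and> x \<in> G \<and> X closure_of G \<subseteq> W" using shrink[OF H P M that] .
    then show ?thesis unfolding f_def by (rule someI_ex)
  qed
  have inv: "openin X (Wn n) \<and> x \<in> Wn n \<and> Wn n \<subseteq> Y" for n
  proof (induction n)
    case 0 
    have "Wn 0 = W0" by (simp add: Wn_def)
    then show ?case using W x WY by (simp only:)
  next
    case (Suc n)
    have e: "Wn (Suc n) = f (Wn n)" by (simp add: Wn_def)
    have IH: "openin X (Wn n)" "x \<in> Wn n" "Wn n \<subseteq> Y" using Suc by simp_all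
    have F: "openin X (f (Wn n)) \<and> x \<in> f (Wn n) \<and> X closure_of (f (Wn n)) \<subseteq> Wn n"
      by (rule fprop[OF IH])
    have s1: "f (Wn n) \<subseteq> X closure_of (f (Wn n))"
      using closure_of_subset[OF openin_subset[OF conjunct1[OF F]]] .
    have "f (Wn n) \<subseteq> Y" using s1 F IH(3) by (meson order_trans)
    then show ?case unfolding e using F by (intro conjI) (rule conjunct1[OF F], rule conjunct1[OF conjunct2[OF F]], assumption)
  qed
  have step: "X closure_of Wn (Suc n) \<subseteq> Wn n" for n
  proof -
    have e: "Wn (Suc n) = f (Wn n)" by (simp add: Wn_def)
    have IH: "openin X (Wn n)" "x \<in> Wn n" "Wn n \<subseteq> Y" using inv[of n] by simp_all
    have F: "openin X (f (Wn n)) \<and> x \<in> f (Wn n) \<and> X closure_of (f (Wn n)) \<subseteq> Wn n"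
      by (rule fprop[OF IH])
    show ?thesis unfolding e using F by (elim conjE)
  qed
  define C where "C = topspace X \<inter> \<Inter>(range Wn)"
  have "countable (range Wn)" by simp
  moreover have "\<forall>U\<in>range Wn. openin X U" using inv by blast
  ultimately have oC: "openin X C" unfolding C_def using P[unfolded p_space_def, rule_format, of "range Wn"] by blast
  have "X closure_of C \<subseteq> C"
  proof
    fix p assume p: "p \<in> X closure_of C"
    have "p \<in> Wn n" for n
    proof -
      have "C \<subseteq> Wn (Suc n)" unfolding C_def by (intro subsetI) (erule IntE, erule InterD, rule rangeI)
      then have "X closure_of C \<subseteq> X closure_of Wn (Suc n)" by (rule closure_of_mono)
      then show ?thesis using step[of n] p by blast
    qed
    moreover have "p \<in> topspace X" using p closure_of_subset_topspace[of X C] by blast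
    ultimately show "p \<in> C" unfolding C_def by blast
  qed
  moreover have "C \<subseteq> topspace X" unfolding C_def by blast
  ultimately have cC: "closedin X C" using closure_of_subset_eq[of C X] by blast
  have "Wn 0 = W0" by (simp add: Wn_def)
  then have CW: "C \<subseteq> W0" unfolding C_def by (metis Int_lower2 Inf_lower rangeI subset_trans)
  have xt: "x \<in> topspace X" using openin_subset[OF W] x by blast
  have xC: "x \<in> C" using inv xt unfolding C_def by simp
  show ?thesis using oC cC CW xC by blast
qed

theorem theorem3p7:
  fixes X :: "'a topology"
  assumes "Hausdorff_space X" and "p_space X"
  defines "P1 \<equiv> locally_menger X"
      and "P2 \<equiv> (\<forall>x\<in>topspace X. \<forall>V. openin X V \<and> x \<in> V \<longrightarrow>
                  (\<exists>U Y. openin X U \<and> menger_subspace X Y \<and> x \<in> U \<and> U \<subseteq> Y \<and> Y \<subseteq> V))"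
      and "P3 \<equiv> (\<forall>x\<in>topspace X. \<exists>U. openin X U \<and> x \<in> U \<and>
                  menger_subspace X (X closure_of U))"
      and "P4 \<equiv> (\<exists>\<B>. (\<forall>B\<in>\<B>. closedin X B \<and> menger_subspace X B) \<and>
                  (\<forall>x\<in>topspace X. \<forall>V. openin X V \<and> x \<in> V \<longrightarrow>
                     (\<exists>B\<in>\<B>. x \<in> X interior_of B \<and> B \<subseteq> V)))"
  shows "(P1 \<longleftrightarrow> P2) \<and> (P2 \<longleftrightarrow> P3) \<and> (P3 \<longleftrightarrow> P4)"
proof -
  note H = assms(1) and P = assms(2)
  have Q: "\<exists>C. openin X C \<and> closedin X C \<and> menger_subspace X C \<and> x \<in> C \<and> C \<subseteq> V"
    if p1: P1 and xt: "x \<in> topspace X" and V: "openin X V" "x \<in> V" for x V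
  proof -
    obtain U Y where UY: "openin X U" "menger_subspace X Y" "x \<in> U" "U \<subseteq> Y"
      using p1 xt unfolding P1_def locally_menger_def by blast
    have oUV: "openin X (U \<inter> V)" using UY(1) V(1) by (rule openin_Int)
    have "x \<in> U \<inter> V" using UY(3) V(2) by blast
    moreover have "U \<inter> V \<subseteq> Y" using UY(4) by blast
    ultimately obtain C where C: "openin X C" "closedin X C" "x \<in> C" "C \<subseteq> U \<inter> V"
      using clopen[OF H P UY(2) oUV] by blast
    have Ytop: "Y \<subseteq> topspace X" "menger_space (subtopology X Y)"
      using UY(2) unfolding menger_subspace_def by auto
    have CY: "C \<subseteq> Y" using C(4) UY(4) by blast
    have "closedin (subtopology X Y) C" using closedin_subset_topspace[OF C(2) CY] .
    then have "menger_space (subtopology (subtopology X Y) C)" using menger_closed[OF Ytop(2)] by blast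
    moreover have "subtopology (subtopology X Y) C = subtopology X C"
      using CY by (simp add: subtopology_subtopology Int_absorb1)
    ultimately have "menger_space (subtopology X C)" by simp
    moreover have "C \<subseteq> topspace X" using CY Ytop(1) by blast
    ultimately have "menger_subspace X C" unfolding menger_subspace_def by blast
    then show ?thesis using C by blast
  qed
  have 12: "P1 \<Longrightarrow> P2"
  proof -
    assume p1: P1
    show P2 unfolding P2_def
    proof (intro ballI allI impI)
      fix x V assume "x \<in> topspace X" "openin X V \<and> x \<in> V"
      then obtain C where "openin X C" "closedin X C" "menger_subspace X C" "x \<in> C" "C \<subseteq> V"
        using Q[OF p1] by blast
      then show "\<exists>U Y. openin X U \<and> menger_subspace X Y \<and> x \<in> U \<and> U \<subseteq> Y \<and> Y \<subseteq> V"
        by blast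
    qed
  qed
  have 21: "P2 \<Longrightarrow> P1"
  proof -
    assume p2: P2
    show P1 unfolding P1_def locally_menger_def
    proof
      fix x assume "x \<in> topspace X"
      then obtain U Y where "openin X U" "menger_subspace X Y" "x \<in> U" "U \<subseteq> Y"
        using p2[unfolded P2_def, rule_format, of x "topspace X"] by blast
      then show "\<exists>U Y. openin X U \<and> menger_subspace X Y \<and> x \<in> U \<and> U \<subseteq> Y" by blast
    qed
  qed
  have 13: "P1 \<Longrightarrow> P3"
  proof -
    assume p1: P1
    show P3 unfolding P3_def
    proof
      fix x assume x: "x \<in> topspace X"
      then obtain C where C: "openin X C" "closedin X C" "menger_subspace X C" "x \<in> C"
        using Q[OF p1 x, of "topspace X"] by blast
      have "X closure_of C = C" using C(2) by (rule closure_of_closedin)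
      then show "\<exists>U. openin X U \<and> x \<in> U \<and> menger_subspace X (X closure_of U)"
        using C by metis
    qed
  qed
  have 31: "P3 \<Longrightarrow> P1"
  proof -
    assume p3: P3
    show P1 unfolding P1_def locally_menger_def
    proof
      fix x assume "x \<in> topspace X"
      then obtain U where U: "openin X U" "x \<in> U" "menger_subspace X (X closure_of U)"
        using p3 unfolding P3_def by blast
      have "U \<subseteq> X closure_of U" using closure_of_subset[OF openin_subset[OF U(1)]] .
      then show "\<exists>U Y. openin X U \<and> menger_subspace X Y \<and> x \<in> U \<and> U \<subseteq> Y"
        using U by blast
    qed
  qed
  have 14: "P1 \<Longrightarrow> P4"
  proof -
    assume p1: P1
    let ?B = "{C. openin X C \<and> closedin X C \<and> menger_subspace X C}"
    have "\<forall>B\<in>?B. closedin X B \<and> menger_subspace X B" by blast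
    moreover have "\<forall>x\<in>topspace X. \<forall>V. openin X V \<and> x \<in> V \<longrightarrow>
                     (\<exists>B\<in>?B. x \<in> X interior_of B \<and> B \<subseteq> V)"
    proof (intro ballI allI impI)
      fix x V assume "x \<in> topspace X" "openin X V \<and> x \<in> V"
      then obtain C where C: "openin X C" "closedin X C" "menger_subspace X C" "x \<in> C" "C \<subseteq> V"
        using Q[OF p1] by blast
      have "X interior_of C = C" using C(1) by (rule interior_of_openin)
      then show "\<exists>B\<in>?B. x \<in> X interior_of B \<and> B \<subseteq> V" using C by blast
    qed
    ultimately show P4 unfolding P4_def by blast
  qed
  have 41: "P4 \<Longrightarrow> P1"
  proof -
    assume p4: P4
    then obtain \<B> where B: "\<forall>B\<in>\<B>. closedin X B \<and> menger_subspace X B"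
      "\<forall>x\<in>topspace X. \<forall>V. openin X V \<and> x \<in> V \<longrightarrow> (\<exists>B\<in>\<B>. x \<in> X interior_of B \<and> B \<subseteq> V)"
      unfolding P4_def by blast
    show P1 unfolding P1_def locally_menger_def
    proof
      fix x assume x: "x \<in> topspace X"
      then obtain B where "B \<in> \<B>" "x \<in> X interior_of B"
        using B(2)[rule_format, OF x, of "topspace X"] by blast
      moreover have "openin X (X interior_of B)" by (rule openin_interior_of)
      moreover have "X interior_of B \<subseteq> B" by (rule interior_of_subset)
      ultimately show "\<exists>U Y. openin X U \<and> menger_subspace X Y \<and> x \<in> U \<and> U \<subseteq> Y"
        using B(1) by blast
    qed
  qed
  show ?thesis using 12 21 13 31 14 41 by blast
qed

end
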